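(* Let $q\ge2$ be even, $n\ge1$, $k\in[1,n]$, $V\subseteq\Sigma_q^n$ and $\boldsymbol{x}\in V$. Let $N_k(\boldsymbol{x};V)=\{\boldsymbol{z}\in V:\boldsymbol{z}\ne\boldsymbol{x},\ RC_k^1(\boldsymbol{z})\cap RC_k^1(\boldsymbol{x})\ne\varnothing\}$. Then $\#N_k(\boldsymbol{x};V)\le n(n-k+1)-1$.
   Context: $\Sigma_q=\{0,\dots,q-1\}$. A complement operation is a fixed bijection $a\mapsto\overline{a}$ on $\Sigma_q$ with $\overline{a}\ne a$, $\overline{\overline{a}}=a$; $\boldsymbol{v}^{RC}=\overline{v_k}\cdots\overline{v_1}$ for $\boldsymbol{v}=v_1\cdots v_k$. For $\boldsymbol{x}=\boldsymbol{u}\boldsymbol{v}\boldsymbol{w}\in\Sigma_q^n$ with $|\boldsymbol{u}|=i-1$, $|\boldsymbol{v}|=k$, $RC_{k,i}(\boldsymbol{x})=\boldsymbol{u}\boldsymbol{v}\boldsymbol{v}^{RC}\boldsymbol{w}$, and $RC_k^1(\boldsymbol{x})=\{RC_{k,i}(\boldsymbol{x}):i\in[1,n-k+1]\}$. *)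

theory Defs
  imports Main
begin

definition is_complement :: "nat \<Rightarrow> (nat \<Rightarrow> nat) \<Rightarrow> bool" where
  "is_complement q c \<longleftrightarrow> bij_betw c {0..<q} {0..<q}
     \<and> (\<forall>a\<in>{0..<q}. c a \<noteq> a \<and> c (c a) = a)"

definition rc :: "(nat \<Rightarrow> nat) \<Rightarrow> nat list \<Rightarrow> nat list" where
  "rc c v = rev (map c v)"

text \<open>RC_{k,i}(x) = u v v^RC w with |u| = i-1, |v| = k (1-based i).\<close>
definition RC_dup :: "(nat \<Rightarrow> nat) \<Rightarrow> nat \<Rightarrow> nat \<Rightarrow> nat list \<Rightarrow> nat list" where
  "RC_dup c k i x = (let u = take (i - 1) x; v = take k (drop (i - 1) x);
                        w = drop (i - 1 + k) x in u @ v @ rc c v @ w)"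

definition RC1 :: "(nat \<Rightarrow> nat) \<Rightarrow> nat \<Rightarrow> nat list \<Rightarrow> nat list set" where
  "RC1 c k x = {RC_dup c k i x | i. i \<in> {1..length x - k + 1}}"

definition strings :: "nat \<Rightarrow> nat \<Rightarrow> nat list set" where
  "strings q n = {x. length x = n \<and> set x \<subseteq> {0..<q}}"

definition N_nbhd :: "(nat \<Rightarrow> nat) \<Rightarrow> nat \<Rightarrow> nat list \<Rightarrow> nat list set \<Rightarrow> nat list set" where
  "N_nbhd c k x V = {z \<in> V. z \<noteq> x \<and> RC1 c k z \<inter> RC1 c k x \<noteq> {}}"

end

theory Submission
  imports Defs
begin

definition Del :: "nat \<Rightarrow> nat \<Rightarrow> nat list \<Rightarrow> nat list" where
  "Del k i y = take (i - 1 + k) y @ drop (i - 1 + 2 * k) y"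

lemma Del_RC:
  assumes "length z = n" "1 \<le> i" "i \<le> n - k + 1" "k \<le> n"
  shows "Del k i (RC_dup c k i z) = z"
proof -
  have l: "length (take k (drop (i - 1) z)) = k" using assms by auto
  have lu: "length (take (i - 1) z) = i - 1" using assms by auto
  have lr: "length (rc c (take k (drop (i - 1) z))) = k" using l by (simp add: rc_def)
  let ?u = "take (i - 1) z" and ?v = "take k (drop (i - 1) z)" and ?r = "rc c (take k (drop (i - 1) z))"
    and ?w = "drop (i - 1 + k) z"
  have "RC_dup c k i z = (?u @ ?v) @ (?r @ ?w)" by (simp add: RC_dup_def Let_def)
  hence "Del k i (RC_dup c k i z) = (?u @ ?v) @ ?w"
    using l lu lr by (simp add: Del_def)
  also have "\<dots> = z"
    by (metis add.commute append_assoc append_take_drop_id drop_drop take_add)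
  finally show ?thesis .
qed

theorem lemma6:
  fixes q n k :: nat and c :: "nat \<Rightarrow> nat" and V :: "nat list set" and x :: "nat list"
  assumes "q \<ge> 2" and "even q" and "is_complement q c"
    and "n \<ge> 1" and "1 \<le> k" and "k \<le> n"
    and "V \<subseteq> strings q n" and "x \<in> V"
  shows "card (N_nbhd c k x V) \<le> n * (n - k + 1) - 1"
proof -
  let ?I = "{1..n - k + 1}"
  have lx: "length x = n" using assms(7,8) by (auto simp: strings_def)
  have R: "RC1 c k x = (\<lambda>i. RC_dup c k i x) ` ?I" using lx by (auto simp: RC1_def)
  have cR: "card (RC1 c k x) \<le> n - k + 1" unfolding R
    using card_image_le[of ?I "\<lambda>i. RC_dup c k i x"] by simp
  have fR: "finite (RC1 c k x)" unfolding R by simp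
  let ?S = "(\<lambda>(i, y). Del k i y) ` (?I \<times> RC1 c k x)"
  have fS: "finite ?S" using fR by simp
  have cS: "card ?S \<le> (n - k + 1) * (n - k + 1)"
  proof -
    have "card ?S \<le> card (?I \<times> RC1 c k x)" by (rule card_image_le) (use fR in simp)
    also have "\<dots> = (n - k + 1) * card (RC1 c k x)" by (simp add: card_cartesian_product)
    also have "\<dots> \<le> (n - k + 1) * (n - k + 1)" using cR by (rule mult_left_mono) simp
    finally show ?thesis .
  qed
  have xS: "x \<in> ?S"
  proof -
    have "RC_dup c k 1 x \<in> RC1 c k x" unfolding R by auto
    moreover have "Del k 1 (RC_dup c k 1 x) = x" using Del_RC[OF lx] assms by simp
    moreover have "(1::nat) \<in> ?I" by simp
    ultimately show ?thesis by (metis (no_types, lifting) SigmaI case_prod_conv image_eqI)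
  qed
  have sub: "N_nbhd c k x V \<subseteq> ?S - {x}"
  proof
    fix z assume z: "z \<in> N_nbhd c k x V"
    then have zV: "z \<in> V" and zx: "z \<noteq> x" and ne: "RC1 c k z \<inter> RC1 c k x \<noteq> {}"
      by (auto simp: N_nbhd_def)
    have lz: "length z = n" using zV assms(7) by (auto simp: strings_def)
    obtain y where y1: "y \<in> RC1 c k z" and y2: "y \<in> RC1 c k x" using ne by blast
    obtain i where i: "i \<in> ?I" and yi: "y = RC_dup c k i z" using y1 lz by (auto simp: RC1_def)
    have "Del k i y = z" using Del_RC[OF lz] i yi assms by auto
    hence "z \<in> ?S" using i y2 by (metis (no_types, lifting) SigmaI case_prod_conv image_eqI)
    thus "z \<in> ?S - {x}" using zx by simp
  qed
  have "card (N_nbhd c k x V) \<le> card (?S - {x})" by (rule card_mono) (use fS sub in auto)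
  also have "\<dots> = card ?S - 1" using xS fS by simp
  also have "\<dots> \<le> (n - k + 1) * (n - k + 1) - 1" using cS by (rule diff_le_mono)
  also have "\<dots> \<le> n * (n - k + 1) - 1"
  proof -
    have "n - k + 1 \<le> n" using assms by simp
    hence "(n - k + 1) * (n - k + 1) \<le> n * (n - k + 1)" by (rule mult_right_mono) simp
    thus ?thesis by (rule diff_le_mono)
  qed
  finally show ?thesis .
qed

end
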